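(* Let $T,C_1>0$ and let $\mu\in C([0,T],(0,\infty))$ satisfy $\Phi_h(\mu)\neq 0$. Then the Gâteaux derivatives below exist, and the following two statements are equivalent: (a) $\mathcal{G}(\mu)=C_1$ and there exists $\lambda\in\mathbb{R}$ such that for every $\delta\mu\in C([0,T],\mathbb{R})$, $\frac{\mathrm{d}}{\mathrm{d}\varepsilon}\Big|_{\varepsilon=0}\Big[\Phi(z_{\mu+\varepsilon\delta\mu}(T))+\lambda\,\mathcal{G}(\mu+\varepsilon\delta\mu)\Big]=0$ (the first-order necessary conditions for a stationary point of $\mu\mapsto\Phi(z_\mu(T))$ subject to $\mathcal{G}(\mu)=C_1$); (b) $\mathcal{G}(\mu)=C_1$ and there exists $\lambda_{\mathrm{ref}}\in\mathbb{R}$ such that for every $\delta\mu\in C([0,T],\mathbb{R})$, $\frac{\mathrm{d}}{\mathrm{d}\varepsilon}\Big|_{\varepsilon=0}\Big[\mathcal{I}(\mu+\varepsilon\delta\mu)+\lambda_{\mathrm{ref}}\,\mathcal{G}(\mu+\varepsilon\delta\mu)\Big]=0$ (the first-order necessary conditions for a stationary point of $\mathcal{I}$ subject to $\mathcal{G}(\mu)=C_1$). Moreover, the multipliers correspond via $\lambda_{\mathrm{ref}}=\lambda/\Phi_h(\mu)$.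
   Context: Standing setup: $n,s\ge1$, $p\in\mathbb{R}^s$, $z_0\in\mathbb{R}^n$; $h:\mathbb{R}^n\times\mathbb{R}^s\to\mathbb{R}^n$ is continuously differentiable in its first argument and such that the autonomous initial value problem $\hat z'(\tau)=h(\hat z(\tau),p)$, $\hat z(0)=z_0$ has a unique solution $\hat z$ defined for all $\tau\in\mathbb{R}$. For $T>0$ and $\mu\in C([0,T],\mathbb{R})$, $z_\mu:[0,T]\to\mathbb{R}^n$ denotes the solution of $\dot z(t)=\mu(t)h(z(t),p)$, $z(0)=z_0$. $\Phi:\mathbb{R}^n\to\mathbb{R}$ is continuously differentiable, and $g:\mathbb{R}\to\mathbb{R}$ is continuously differentiable and positive. Define $\mathcal{G}(\mu):=\int_0^T g(\mu(t))\,\mathrm{d}t$, $\mathcal{I}(\mu):=\int_0^T\mu(t)\,\mathrm{d}t$, and $\Phi_h(\mu):=\nabla\Phi(z_\mu(T))\cdot h(z_\mu(T),p)$ (the Lie derivative of $\Phi$ along $h$ at the terminal state). *)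

theory Defs
  imports "HOL-Analysis.Analysis"
begin

definition C1_map :: "('a::euclidean_space \<Rightarrow> 'b::euclidean_space) \<Rightarrow> bool" where
  "C1_map f \<longleftrightarrow> (\<exists>D :: 'a \<Rightarrow> ('a \<Rightarrow>\<^sub>L 'b).
      (\<forall>x. (f has_derivative blinfun_apply (D x)) (at x)) \<and> continuous_on UNIV D)"

definition solves_ivp ::
  "(real^'n \<Rightarrow> real^'s \<Rightarrow> real^'n) \<Rightarrow> real^'s \<Rightarrow> real^'n \<Rightarrow> real \<Rightarrow> (real \<Rightarrow> real)
    \<Rightarrow> (real \<Rightarrow> real^'n) \<Rightarrow> bool" where
  "solves_ivp h p z0 T mu z \<longleftrightarrow> z 0 = z0 \<and>
     (\<forall>t\<in>{0..T}. (z has_vector_derivative (mu t *\<^sub>R h (z t) p)) (at t within {0..T}))"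

definition zT ::
  "(real^'n \<Rightarrow> real^'s \<Rightarrow> real^'n) \<Rightarrow> real^'s \<Rightarrow> real^'n \<Rightarrow> real \<Rightarrow> (real \<Rightarrow> real) \<Rightarrow> real^'n" where
  "zT h p z0 T mu = (THE v. \<exists>z. solves_ivp h p z0 T mu z \<and> z T = v)"

definition Gfun :: "(real \<Rightarrow> real) \<Rightarrow> real \<Rightarrow> (real \<Rightarrow> real) \<Rightarrow> real" where
  "Gfun g T mu = integral {0..T} (\<lambda>t. g (mu t))"

definition Ifun :: "real \<Rightarrow> (real \<Rightarrow> real) \<Rightarrow> real" where
  "Ifun T mu = integral {0..T} mu"

text \<open>Lie derivative nabla Phi(z_mu(T)) . h(z_mu(T),p); the directional
  (Frechet) derivative of Phi at x in direction v equals nabla Phi(x) . v.\<close>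
definition Phi_h ::
  "(real^'n \<Rightarrow> real) \<Rightarrow> (real^'n \<Rightarrow> real^'s \<Rightarrow> real^'n) \<Rightarrow> real^'s \<Rightarrow> real^'n \<Rightarrow> real
     \<Rightarrow> (real \<Rightarrow> real) \<Rightarrow> real" where
  "Phi_h Phi h p z0 T mu =
     frechet_derivative Phi (at (zT h p z0 T mu)) (h (zT h p z0 T mu) p)"

end

theory Submission imports Defs begin

lemma C1_lip:
  fixes H :: "'a::euclidean_space \<Rightarrow> 'b::euclidean_space"
  assumes "C1_map H"
  shows "\<exists>L\<ge>0. \<forall>x\<in>cball 0 R. \<forall>y\<in>cball 0 R. norm (H x - H y) \<le> L * norm (x - y)"
proof -
  obtain D where dD: "\<And>x. (H has_derivative blinfun_apply (D x)) (at x)" and cD: "continuous_on UNIV D"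
    using assms unfolding C1_map_def by blast
  have "compact (D ` cball 0 R)"
    by (rule compact_continuous_image) (auto intro: continuous_on_subset[OF cD])
  then obtain B where B: "\<And>x. x \<in> cball 0 R \<Longrightarrow> norm (D x) \<le> B"
    by (meson compact_imp_bounded bounded_iff image_eqI)
  define L where "L = max B 0"
  have "norm (H x - H y) \<le> L * norm (x - y)" if "x \<in> cball 0 R" "y \<in> cball 0 R" for x y
  proof (rule differentiable_bound[where S="cball 0 R" and f'="\<lambda>x. blinfun_apply (D x)"])
    show "convex (cball (0::'a) R)" by simp
    show "(H has_derivative blinfun_apply (D x)) (at x within cball 0 R)" for x
      using dD has_derivative_at_withinI by blast
    show "onorm (blinfun_apply (D x)) \<le> L" if "x \<in> cball 0 R" for x
      using B[OF that] unfolding L_def by (simp add: norm_blinfun.rep_eq)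
  qed (use that in auto)
  then show ?thesis unfolding L_def by (intro exI[of _ "max B 0"]) (auto simp: L_def)
qed


lemma ivp_unique:
  fixes H :: "'a::euclidean_space \<Rightarrow> 'a" and nu :: "real \<Rightarrow> real"
  assumes HC1: "C1_map H" and nuc: "continuous_on {0..T} nu"
    and d1: "\<And>t. t \<in> {0..T} \<Longrightarrow> (z1 has_vector_derivative (nu t *\<^sub>R H (z1 t))) (at t within {0..T})"
    and d2: "\<And>t. t \<in> {0..T} \<Longrightarrow> (z2 has_vector_derivative (nu t *\<^sub>R H (z2 t))) (at t within {0..T})"
    and i0: "z1 0 = z2 0" and t: "t \<in> {0..T}"
  shows "z1 t = z2 t"
proof -
  have c1: "continuous_on {0..T} z1"
    using d1 has_vector_derivative_continuous continuous_on_eq_continuous_within by blast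
  have c2: "continuous_on {0..T} z2"
    using d2 has_vector_derivative_continuous continuous_on_eq_continuous_within by blast
  obtain R1 where R1: "\<And>s. s \<in> {0..T} \<Longrightarrow> norm (z1 s) \<le> R1"
    using compact_imp_bounded[OF compact_continuous_image[OF c1 compact_Icc]]
    by (meson bounded_iff image_eqI)
  obtain R2 where R2: "\<And>s. s \<in> {0..T} \<Longrightarrow> norm (z2 s) \<le> R2"
    using compact_imp_bounded[OF compact_continuous_image[OF c2 compact_Icc]]
    by (meson bounded_iff image_eqI)
  obtain M0 where M0: "\<And>s. s \<in> {0..T} \<Longrightarrow> norm (nu s) \<le> M0"
    using compact_imp_bounded[OF compact_continuous_image[OF nuc compact_Icc]]
    by (meson bounded_iff image_eqI)
  define M where "M = max M0 0"
  have M: "\<And>s. s \<in> {0..T} \<Longrightarrow> \<bar>nu s\<bar> \<le> M" "M \<ge> 0" using M0 unfolding M_def by force+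
  define R where "R = max R1 R2"
  obtain L where L: "L \<ge> 0" "\<And>x y. x\<in>cball 0 R \<Longrightarrow> y\<in>cball 0 R \<Longrightarrow> norm (H x - H y) \<le> L * norm (x - y)"
    using C1_lip[OF HC1, of R] by blast
  have inb1: "z1 s \<in> cball 0 R" if "s \<in> {0..T}" for s using R1[OF that] by (auto simp: R_def)
  have inb2: "z2 s \<in> cball 0 R" if "s \<in> {0..T}" for s using R2[OF that] by (auto simp: R_def)
  define e where "e s = z1 s - z2 s" for s
  define c where "c = 2 * M * L"
  define f where "f s = exp (- c * s) * (e s \<bullet> e s)" for s
  have ce: "continuous_on {0..T} e" unfolding e_def by (intro continuous_intros c1 c2)
  have cf: "continuous_on {0..T} f" unfolding f_def by (intro continuous_on_mult continuous_on_inner ce continuous_intros)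
  have "f t \<le> f 0"
  proof (rule DERIV_nonpos_imp_decreasing_open[where f=f and a=0 and b=t])
    show "0 \<le> t" using t by auto
    show "continuous_on {0..t} f" using cf t by (auto intro: continuous_on_subset)
    fix x assume x: "0 < x" "x < t"
    then have xT: "x \<in> {0..T}" using t by auto
    have atx: "at x within {0..T} = at x" using x t by (intro at_within_Icc_at) auto
    define e' where "e' = nu x *\<^sub>R (H (z1 x) - H (z2 x))"
    have de: "(e has_vector_derivative e') (at x)"
      unfolding e_def e'_def scaleR_diff_right
      using d1[OF xT] d2[OF xT] unfolding atx by (intro derivative_intros)
    have dee: "((\<lambda>s. e s \<bullet> e s) has_real_derivative 2 * (e x \<bullet> e')) (at x)"
      unfolding has_field_derivative_def
      using has_derivative_inner[OF de[unfolded has_vector_derivative_def] de[unfolded has_vector_derivative_def]]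
      by (rule has_derivative_eq_rhs) (auto simp: inner_commute algebra_simps)
    have df: "(f has_real_derivative exp (- c * x) * (2 * (e x \<bullet> e') - c * (e x \<bullet> e x))) (at x)"
      unfolding f_def
      by (rule derivative_eq_intros dee refl | simp)+ (simp add: algebra_simps)
    have cs: "e x \<bullet> e' \<le> norm (e x) * norm e'" by (rule norm_cauchy_schwarz)
    have "norm e' = \<bar>nu x\<bar> * norm (H (z1 x) - H (z2 x))" unfolding e'_def by simp
    also have "\<dots> \<le> M * (L * norm (e x))"
      using M(1)[OF xT] L(2)[OF inb1[OF xT] inb2[OF xT]] M(2)
      unfolding e_def by (intro mult_mono) auto
    finally have ne: "norm e' \<le> M * (L * norm (e x))" .
    have "norm (e x) * norm e' \<le> norm (e x) * (M * (L * norm (e x)))"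
      using ne by (intro mult_left_mono) auto
    with cs have "e x \<bullet> e' \<le> M * L * (norm (e x))^2"
      by (simp add: power2_eq_square algebra_simps)
    then have "2 * (e x \<bullet> e') - c * (e x \<bullet> e x) \<le> 0"
      unfolding c_def by (simp add: power2_norm_eq_inner)
    then show "\<exists>y. DERIV f x :> y \<and> y \<le> 0" using df
      by (intro exI[of _ "exp (- c * x) * (2 * (e x \<bullet> e') - c * (e x \<bullet> e x))"])
         (auto simp: mult_nonneg_nonpos)
  qed
  moreover have "f 0 = 0" unfolding f_def e_def using i0 by simp
  moreover have "f t \<ge> 0" unfolding f_def by simp
  ultimately have "exp (- c * t) * (e t \<bullet> e t) = 0" unfolding f_def by linarith
  then have "e t \<bullet> e t = 0" by simp
  then show ?thesis unfolding e_def by simp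
qed


lemma zT_eq:
  fixes h :: "real^'n \<Rightarrow> real^'s \<Rightarrow> real^'n" and zh :: "real \<Rightarrow> real^'n"
  assumes HC1: "C1_map (\<lambda>x. h x p)"
    and zh0: "zh 0 = z0" and zhd: "\<And>\<tau>. (zh has_vector_derivative h (zh \<tau>) p) (at \<tau>)"
    and nuc: "continuous_on {0..T} nu" and T: "0 \<le> T"
  shows "zT h p z0 T nu = zh (integral {0..T} nu)"
proof -
  define y where "y t = zh (integral {0..t} nu)" for t
  have sy: "solves_ivp h p z0 T nu y"
    unfolding solves_ivp_def
  proof (intro conjI ballI)
    show "y 0 = z0" unfolding y_def using zh0 by simp
    fix t assume t: "t \<in> {0..T}"
    have "((zh \<circ> (\<lambda>u. integral {0..u} nu)) has_vector_derivative nu t *\<^sub>R h (zh (integral {0..t} nu)) p)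
            (at t within {0..T})"
      by (rule vector_diff_chain_within[OF integral_has_vector_derivative[OF nuc t]])
         (rule has_vector_derivative_at_within[OF zhd])
    then show "(y has_vector_derivative nu t *\<^sub>R h (y t) p) (at t within {0..T})"
      unfolding y_def o_def .
  qed
  show ?thesis
    unfolding zT_def
  proof (rule the_equality)
    show "\<exists>z. solves_ivp h p z0 T nu z \<and> z T = zh (integral {0..T} nu)"
      using sy by (auto simp: y_def)
    fix v assume "\<exists>z. solves_ivp h p z0 T nu z \<and> z T = v"
    then obtain z where sz: "solves_ivp h p z0 T nu z" and zv: "z T = v" by blast
    have "z T = y T"
      by (rule ivp_unique[OF HC1 nuc, of z y])
         (use sz sy T in \<open>auto simp: solves_ivp_def\<close>)
    then show "v = zh (integral {0..T} nu)" using zv by (simp add: y_def)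
  qed
qed


lemma G_deriv:
  fixes g :: "real \<Rightarrow> real"
  assumes g_C1: "g C1_differentiable_on UNIV"
    and mu_cont: "continuous_on {0..T} mu" and dc: "continuous_on {0..T} dmu"
  shows "\<exists>\<gamma>. ((\<lambda>\<epsilon>. Gfun g T (\<lambda>t. mu t + \<epsilon> * dmu t)) has_real_derivative \<gamma>) (at 0)"
proof -
  obtain D where dD: "\<And>x. (g has_vector_derivative D x) (at x)" and cD: "continuous_on UNIV D"
    using g_C1 unfolding C1_differentiable_on_def by blast
  have dg: "(g has_real_derivative D x) (at x)" for x
    using dD[of x] by (simp add: has_real_derivative_iff_has_vector_derivative)
  have cg: "continuous_on UNIV g"
    using dg by (metis DERIV_isCont continuous_at_imp_continuous_on)
  have "((\<lambda>\<epsilon>. integral (cbox 0 T) (\<lambda>t. g (mu t + \<epsilon> * dmu t))) has_field_derivative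
          integral (cbox 0 T) (\<lambda>t. D (mu t + 0 * dmu t) * dmu t)) (at 0 within UNIV)"
  proof (rule leibniz_rule_field_derivative[where fx="\<lambda>\<epsilon> t. D (mu t + \<epsilon> * dmu t) * dmu t"])
    fix x :: real and t :: real
    show "((\<lambda>x. g (mu t + x * dmu t)) has_field_derivative D (mu t + x * dmu t) * dmu t) (at x within UNIV)"
    proof -
      have "((\<lambda>x. mu t + x * dmu t) has_real_derivative dmu t) (at x within UNIV)"
        by (auto intro!: derivative_eq_intros)
      from DERIV_chain2[OF dg this] show ?thesis by simp
    qed
  next
    fix x :: real
    have "continuous_on {0..T} (\<lambda>t. g (mu t + x * dmu t))"
      using cg by (intro continuous_on_compose2[OF cg] continuous_on_add continuous_on_mult
                   continuous_on_const mu_cont dc) auto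
    then show "(\<lambda>t. g (mu t + x * dmu t)) integrable_on cbox 0 T"
      by (simp add: integrable_continuous_real)
  next
    have cm: "continuous_on (UNIV \<times> {0..T}) (\<lambda>z. mu (snd z))"
      by (rule continuous_on_compose2[OF mu_cont continuous_on_snd]) auto
    have cdm: "continuous_on (UNIV \<times> {0..T}) (\<lambda>z. dmu (snd z))"
      by (rule continuous_on_compose2[OF dc continuous_on_snd]) auto
    have "continuous_on (UNIV \<times> {0..T}) (\<lambda>z. D (mu (snd z) + fst z * dmu (snd z)) * dmu (snd z))"
      by (intro continuous_on_mult continuous_on_compose2[OF cD] continuous_on_add cm cdm
                continuous_on_fst continuous_on_id) auto
    then show "continuous_on (UNIV \<times> cbox 0 T) (\<lambda>(x, t). D (mu t + x * dmu t) * dmu t)"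
      by (simp add: split_beta)
  qed auto
  then show ?thesis unfolding Gfun_def by (auto simp: cbox_interval)
qed


theorem theorem1:
  fixes h :: "real^'n \<Rightarrow> real^'s \<Rightarrow> real^'n" and p :: "real^'s" and z0 :: "real^'n"
    and Phi :: "real^'n \<Rightarrow> real" and g :: "real \<Rightarrow> real"
    and T C\<^sub>1 :: real and mu :: "real \<Rightarrow> real"
  assumes h_C1: "\<And>q. C1_map (\<lambda>x. h x q)"
    and zhat: "\<exists>!zh :: real \<Rightarrow> real^'n. zh 0 = z0 \<and>
                 (\<forall>\<tau>. (zh has_vector_derivative h (zh \<tau>) p) (at \<tau>))"
    and Phi_C1: "C1_map Phi"
    and g_C1: "g C1_differentiable_on UNIV" and g_pos: "\<And>x. g x > 0"
    and T_pos: "T > 0" and C1_pos: "C\<^sub>1 > 0"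
    and mu_cont: "continuous_on {0..T} mu" and mu_pos: "\<And>t. t \<in> {0..T} \<Longrightarrow> mu t > 0"
    and Phih_nz: "Phi_h Phi h p z0 T mu \<noteq> 0"
  shows "(\<forall>dmu. continuous_on {0..T} dmu \<longrightarrow>
            (\<lambda>\<epsilon>. Phi (zT h p z0 T (\<lambda>t. mu t + \<epsilon> * dmu t))) differentiable (at 0) \<and>
            (\<lambda>\<epsilon>. Gfun g T (\<lambda>t. mu t + \<epsilon> * dmu t)) differentiable (at 0) \<and>
            (\<lambda>\<epsilon>. Ifun T (\<lambda>t. mu t + \<epsilon> * dmu t)) differentiable (at 0))
     \<and> ((Gfun g T mu = C\<^sub>1 \<and> (\<exists>lam. \<forall>dmu. continuous_on {0..T} dmu \<longrightarrow>
            ((\<lambda>\<epsilon>. Phi (zT h p z0 T (\<lambda>t. mu t + \<epsilon> * dmu t))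
                    + lam * Gfun g T (\<lambda>t. mu t + \<epsilon> * dmu t)) has_real_derivative 0) (at 0)))
        \<longleftrightarrow>
        (Gfun g T mu = C\<^sub>1 \<and> (\<exists>lam_ref. \<forall>dmu. continuous_on {0..T} dmu \<longrightarrow>
            ((\<lambda>\<epsilon>. Ifun T (\<lambda>t. mu t + \<epsilon> * dmu t)
                    + lam_ref * Gfun g T (\<lambda>t. mu t + \<epsilon> * dmu t)) has_real_derivative 0) (at 0))))
     \<and> (\<forall>lam. (Gfun g T mu = C\<^sub>1 \<and> (\<forall>dmu. continuous_on {0..T} dmu \<longrightarrow>
            ((\<lambda>\<epsilon>. Phi (zT h p z0 T (\<lambda>t. mu t + \<epsilon> * dmu t))
                    + lam * Gfun g T (\<lambda>t. mu t + \<epsilon> * dmu t)) has_real_derivative 0) (at 0)))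
        \<longleftrightarrow>
        (Gfun g T mu = C\<^sub>1 \<and> (\<forall>dmu. continuous_on {0..T} dmu \<longrightarrow>
            ((\<lambda>\<epsilon>. Ifun T (\<lambda>t. mu t + \<epsilon> * dmu t)
                    + (lam / Phi_h Phi h p z0 T mu) * Gfun g T (\<lambda>t. mu t + \<epsilon> * dmu t))
               has_real_derivative 0) (at 0))))"
proof -
  obtain zh :: "real \<Rightarrow> real^'n" where zh0: "zh 0 = z0" and zhd: "\<And>\<tau>. (zh has_vector_derivative h (zh \<tau>) p) (at \<tau>)"
    using zhat by blast
  have HC1: "C1_map (\<lambda>x. h x p)" by (rule h_C1)
  obtain DP where dPhi: "\<And>x. (Phi has_derivative blinfun_apply (DP x)) (at x)"
    using Phi_C1 unfolding C1_map_def by blast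
  define a where "a = integral {0..T} mu"
  have zTmu: "zT h p z0 T mu = zh a"
    unfolding a_def by (rule zT_eq[where h=h and p=p, OF HC1 zh0 zhd mu_cont]) (use T_pos in auto)
  define P where "P = Phi_h Phi h p z0 T mu"
  have P_eq: "P = DP (zh a) (h (zh a) p)"
    unfolding P_def Phi_h_def zTmu using frechet_derivative_at[OF dPhi[of "zh a"]] by simp
  have Pnz: "P \<noteq> 0" using Phih_nz unfolding P_def .
  have key: "\<exists>b \<gamma>. ((\<lambda>\<epsilon>. Phi (zT h p z0 T (\<lambda>t. mu t + \<epsilon> * dmu t))) has_real_derivative P * b) (at 0)
          \<and> ((\<lambda>\<epsilon>. Gfun g T (\<lambda>t. mu t + \<epsilon> * dmu t)) has_real_derivative \<gamma>) (at 0)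
          \<and> ((\<lambda>\<epsilon>. Ifun T (\<lambda>t. mu t + \<epsilon> * dmu t)) has_real_derivative b) (at 0)"
    if dc: "continuous_on {0..T} dmu" for dmu
  proof -
    define b where "b = integral {0..T} dmu"
    have cnu: "continuous_on {0..T} (\<lambda>t. mu t + \<epsilon> * dmu t)" for \<epsilon>
      by (intro continuous_intros mu_cont dc)
    have intg: "integral {0..T} (\<lambda>t. mu t + \<epsilon> * dmu t) = a + \<epsilon> * b" for \<epsilon>
    proof -
      have "integral {0..T} (\<lambda>t. mu t + \<epsilon> * dmu t) = integral {0..T} mu + integral {0..T} (\<lambda>t. \<epsilon> * dmu t)"
        by (rule integral_add) (auto intro!: integrable_continuous_real mu_cont continuous_intros dc)
      then show ?thesis unfolding a_def b_def by simp
    qed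
    have F1eq: "(\<lambda>\<epsilon>. Phi (zT h p z0 T (\<lambda>t. mu t + \<epsilon> * dmu t))) = Phi \<circ> (zh \<circ> (\<lambda>\<epsilon>. a + \<epsilon> * b))"
      using zT_eq[where h=h and p=p, OF HC1 zh0 zhd cnu] T_pos intg by (auto simp: fun_eq_iff)
    have dl: "((\<lambda>\<epsilon>. a + \<epsilon> * b) has_vector_derivative b) (at 0)"
      unfolding has_real_derivative_iff_has_vector_derivative[symmetric]
      by (auto intro!: derivative_eq_intros)
    have dz: "(zh has_vector_derivative h (zh a) p) (at ((\<lambda>\<epsilon>. a + \<epsilon> * b) 0))"
      using zhd[of a] by simp
    have dw: "((zh \<circ> (\<lambda>\<epsilon>. a + \<epsilon> * b)) has_vector_derivative b *\<^sub>R h (zh a) p) (at 0)"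
      by (rule vector_diff_chain_at[OF dl dz])
    have dPa: "(Phi has_derivative blinfun_apply (DP (zh a))) (at ((zh \<circ> (\<lambda>\<epsilon>. a + \<epsilon> * b)) 0))"
      using dPhi[of "zh a"] by simp
    have "((Phi \<circ> (zh \<circ> (\<lambda>\<epsilon>. a + \<epsilon> * b))) has_derivative
            (blinfun_apply (DP (zh a)) \<circ> (\<lambda>e. e *\<^sub>R (b *\<^sub>R h (zh a) p)))) (at 0)"
      by (rule diff_chain_at[OF dw[unfolded has_vector_derivative_def] dPa])
    moreover have "(blinfun_apply (DP (zh a)) \<circ> (\<lambda>e. e *\<^sub>R (b *\<^sub>R h (zh a) p))) = (*) (P * b)"
      by (simp add: fun_eq_iff P_eq blinfun.scaleR_right)
    ultimately have F1: "((\<lambda>\<epsilon>. Phi (zT h p z0 T (\<lambda>t. mu t + \<epsilon> * dmu t))) has_real_derivative P * b) (at 0)"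
      unfolding F1eq has_field_derivative_def by simp
    obtain \<gamma> where G: "((\<lambda>\<epsilon>. Gfun g T (\<lambda>t. mu t + \<epsilon> * dmu t)) has_real_derivative \<gamma>) (at 0)"
      using G_deriv[OF g_C1 mu_cont dc] by blast
    have I: "((\<lambda>\<epsilon>. Ifun T (\<lambda>t. mu t + \<epsilon> * dmu t)) has_real_derivative b) (at 0)"
      unfolding Ifun_def intg by (auto intro!: derivative_eq_intros)
    show ?thesis using F1 G I by blast
  qed
  have pt: "(((\<lambda>\<epsilon>. Phi (zT h p z0 T (\<lambda>t. mu t + \<epsilon> * dmu t))
                    + lam * Gfun g T (\<lambda>t. mu t + \<epsilon> * dmu t)) has_real_derivative 0) (at 0))
         \<longleftrightarrow> (((\<lambda>\<epsilon>. Ifun T (\<lambda>t. mu t + \<epsilon> * dmu t)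
                    + (lam / P) * Gfun g T (\<lambda>t. mu t + \<epsilon> * dmu t)) has_real_derivative 0) (at 0))"
    if dc: "continuous_on {0..T} dmu" for dmu lam
  proof -
    obtain b \<gamma> where F1: "((\<lambda>\<epsilon>. Phi (zT h p z0 T (\<lambda>t. mu t + \<epsilon> * dmu t))) has_real_derivative P * b) (at 0)"
      and G: "((\<lambda>\<epsilon>. Gfun g T (\<lambda>t. mu t + \<epsilon> * dmu t)) has_real_derivative \<gamma>) (at 0)"
      and I: "((\<lambda>\<epsilon>. Ifun T (\<lambda>t. mu t + \<epsilon> * dmu t)) has_real_derivative b) (at 0)"
      using key[OF dc] by blast
    have S1: "((\<lambda>\<epsilon>. Phi (zT h p z0 T (\<lambda>t. mu t + \<epsilon> * dmu t))
                    + lam * Gfun g T (\<lambda>t. mu t + \<epsilon> * dmu t)) has_real_derivative P * b + lam * \<gamma>) (at 0)"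
      by (intro DERIV_add F1 DERIV_cmult G)
    have S2: "((\<lambda>\<epsilon>. Ifun T (\<lambda>t. mu t + \<epsilon> * dmu t)
                    + (lam / P) * Gfun g T (\<lambda>t. mu t + \<epsilon> * dmu t)) has_real_derivative b + (lam / P) * \<gamma>) (at 0)"
      by (intro DERIV_add I DERIV_cmult G)
    have eq: "b + (lam / P) * \<gamma> = (P * b + lam * \<gamma>) / P" using Pnz by (simp add: field_simps)
    show ?thesis
    proof
      assume A: "((\<lambda>\<epsilon>. Phi (zT h p z0 T (\<lambda>t. mu t + \<epsilon> * dmu t))
                    + lam * Gfun g T (\<lambda>t. mu t + \<epsilon> * dmu t)) has_real_derivative 0) (at 0)"
      have "P * b + lam * \<gamma> = 0" by (rule DERIV_unique[OF S1 A])
      then have "b + (lam / P) * \<gamma> = 0" unfolding eq by simp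
      then show "((\<lambda>\<epsilon>. Ifun T (\<lambda>t. mu t + \<epsilon> * dmu t)
                    + (lam / P) * Gfun g T (\<lambda>t. mu t + \<epsilon> * dmu t)) has_real_derivative 0) (at 0)"
        using S2 by simp
    next
      assume B: "((\<lambda>\<epsilon>. Ifun T (\<lambda>t. mu t + \<epsilon> * dmu t)
                    + (lam / P) * Gfun g T (\<lambda>t. mu t + \<epsilon> * dmu t)) has_real_derivative 0) (at 0)"
      have "b + (lam / P) * \<gamma> = 0" by (rule DERIV_unique[OF S2 B])
      then have "P * b + lam * \<gamma> = 0" unfolding eq using Pnz by simp
      then show "((\<lambda>\<epsilon>. Phi (zT h p z0 T (\<lambda>t. mu t + \<epsilon> * dmu t))
                    + lam * Gfun g T (\<lambda>t. mu t + \<epsilon> * dmu t)) has_real_derivative 0) (at 0)"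
        using S1 by simp
    qed
  qed
  have c1: "\<forall>dmu. continuous_on {0..T} dmu \<longrightarrow>
            (\<lambda>\<epsilon>. Phi (zT h p z0 T (\<lambda>t. mu t + \<epsilon> * dmu t))) differentiable (at 0) \<and>
            (\<lambda>\<epsilon>. Gfun g T (\<lambda>t. mu t + \<epsilon> * dmu t)) differentiable (at 0) \<and>
            (\<lambda>\<epsilon>. Ifun T (\<lambda>t. mu t + \<epsilon> * dmu t)) differentiable (at 0)"
  proof (intro allI impI conjI)
    fix dmu :: "real \<Rightarrow> real" assume dc: "continuous_on {0..T} dmu"
    from key[OF dc] obtain b \<gamma> where F1: "((\<lambda>\<epsilon>. Phi (zT h p z0 T (\<lambda>t. mu t + \<epsilon> * dmu t))) has_real_derivative P * b) (at 0)"
      and G: "((\<lambda>\<epsilon>. Gfun g T (\<lambda>t. mu t + \<epsilon> * dmu t)) has_real_derivative \<gamma>) (at 0)"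
      and I: "((\<lambda>\<epsilon>. Ifun T (\<lambda>t. mu t + \<epsilon> * dmu t)) has_real_derivative b) (at 0)"
      by blast
    show "(\<lambda>\<epsilon>. Phi (zT h p z0 T (\<lambda>t. mu t + \<epsilon> * dmu t))) differentiable (at 0)"
      by (rule differentiableI[OF has_field_derivative_imp_has_derivative[OF F1]])
    show "(\<lambda>\<epsilon>. Gfun g T (\<lambda>t. mu t + \<epsilon> * dmu t)) differentiable (at 0)"
      by (rule differentiableI[OF has_field_derivative_imp_has_derivative[OF G]])
    show "(\<lambda>\<epsilon>. Ifun T (\<lambda>t. mu t + \<epsilon> * dmu t)) differentiable (at 0)"
      by (rule differentiableI[OF has_field_derivative_imp_has_derivative[OF I]])
  qed
  have c3: "\<forall>lam. (Gfun g T mu = C\<^sub>1 \<and> (\<forall>dmu. continuous_on {0..T} dmu \<longrightarrow>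
            ((\<lambda>\<epsilon>. Phi (zT h p z0 T (\<lambda>t. mu t + \<epsilon> * dmu t))
                    + lam * Gfun g T (\<lambda>t. mu t + \<epsilon> * dmu t)) has_real_derivative 0) (at 0)))
        \<longleftrightarrow>
        (Gfun g T mu = C\<^sub>1 \<and> (\<forall>dmu. continuous_on {0..T} dmu \<longrightarrow>
            ((\<lambda>\<epsilon>. Ifun T (\<lambda>t. mu t + \<epsilon> * dmu t)
                    + (lam / Phi_h Phi h p z0 T mu) * Gfun g T (\<lambda>t. mu t + \<epsilon> * dmu t))
               has_real_derivative 0) (at 0)))"
    unfolding P_def[symmetric]
    apply (rule allI)
    subgoal for lam using pt[of _ lam] by blast
    done
  have c2: "(Gfun g T mu = C\<^sub>1 \<and> (\<exists>lam. \<forall>dmu. continuous_on {0..T} dmu \<longrightarrow>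
            ((\<lambda>\<epsilon>. Phi (zT h p z0 T (\<lambda>t. mu t + \<epsilon> * dmu t))
                    + lam * Gfun g T (\<lambda>t. mu t + \<epsilon> * dmu t)) has_real_derivative 0) (at 0)))
        \<longleftrightarrow>
        (Gfun g T mu = C\<^sub>1 \<and> (\<exists>lam_ref. \<forall>dmu. continuous_on {0..T} dmu \<longrightarrow>
            ((\<lambda>\<epsilon>. Ifun T (\<lambda>t. mu t + \<epsilon> * dmu t)
                    + lam_ref * Gfun g T (\<lambda>t. mu t + \<epsilon> * dmu t)) has_real_derivative 0) (at 0)))"
  proof (intro iffI conjI)
    assume L: "Gfun g T mu = C\<^sub>1 \<and> (\<exists>lam. \<forall>dmu. continuous_on {0..T} dmu \<longrightarrow>
            ((\<lambda>\<epsilon>. Phi (zT h p z0 T (\<lambda>t. mu t + \<epsilon> * dmu t))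
                    + lam * Gfun g T (\<lambda>t. mu t + \<epsilon> * dmu t)) has_real_derivative 0) (at 0))"
    then show "Gfun g T mu = C\<^sub>1" by blast
    from L obtain lam where "\<forall>dmu. continuous_on {0..T} dmu \<longrightarrow>
            ((\<lambda>\<epsilon>. Phi (zT h p z0 T (\<lambda>t. mu t + \<epsilon> * dmu t))
                    + lam * Gfun g T (\<lambda>t. mu t + \<epsilon> * dmu t)) has_real_derivative 0) (at 0)" by blast
    then show "\<exists>lam_ref. \<forall>dmu. continuous_on {0..T} dmu \<longrightarrow>
            ((\<lambda>\<epsilon>. Ifun T (\<lambda>t. mu t + \<epsilon> * dmu t)
                    + lam_ref * Gfun g T (\<lambda>t. mu t + \<epsilon> * dmu t)) has_real_derivative 0) (at 0)"
      using pt[of _ lam] by (intro exI[of _ "lam / P"]) blast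
  next
    assume R: "Gfun g T mu = C\<^sub>1 \<and> (\<exists>lam_ref. \<forall>dmu. continuous_on {0..T} dmu \<longrightarrow>
            ((\<lambda>\<epsilon>. Ifun T (\<lambda>t. mu t + \<epsilon> * dmu t)
                    + lam_ref * Gfun g T (\<lambda>t. mu t + \<epsilon> * dmu t)) has_real_derivative 0) (at 0))"
    then show "Gfun g T mu = C\<^sub>1" by blast
    from R obtain lr where lr: "\<forall>dmu. continuous_on {0..T} dmu \<longrightarrow>
            ((\<lambda>\<epsilon>. Ifun T (\<lambda>t. mu t + \<epsilon> * dmu t)
                    + lr * Gfun g T (\<lambda>t. mu t + \<epsilon> * dmu t)) has_real_derivative 0) (at 0)" by blast
    have e: "lr * P / P = lr" using Pnz by simp
    show "\<exists>lam. \<forall>dmu. continuous_on {0..T} dmu \<longrightarrow>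
            ((\<lambda>\<epsilon>. Phi (zT h p z0 T (\<lambda>t. mu t + \<epsilon> * dmu t))
                    + lam * Gfun g T (\<lambda>t. mu t + \<epsilon> * dmu t)) has_real_derivative 0) (at 0)"
      using pt[of _ "lr * P", unfolded e] lr by (intro exI[of _ "lr * P"]) blast
  qed
  show ?thesis using c1 c2 c3 by blast
qed

end
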